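(* Let $G$ be a star with one central vertex $\mathsf{v}_1$ and $N\ge2$ semi-infinite edges, of which $\mathsf{e}_1,\dots,\mathsf{e}_L$ ($1\le L<N$) are incoming and identified with $(-\infty,0]$ and $\mathsf{e}_{L+1},\dots,\mathsf{e}_N$ are outgoing and identified with $[0,\infty)$, the central vertex corresponding to $0$ on every edge. Consider on $G$ the system $$\partial_tu_i-a_i\partial_x^2\partial_tu_i+b_iu_i\partial_xu_i=0\ \text{ on }\mathsf{e}_i,\ t>0,\qquad u_j(t,0)=u_k(t,0)\ \ (1\le j,k\le N,\ t\ge0),$$ $$\sum_{i=1}^L a_i\partial_xu_i(t,0)-\sum_{i=L+1}^N a_i\partial_xu_i(t,0)=0\quad (t\ge0),$$ i.e. (BBMG) with all $d_i=0$, where $a_i>0$ and $b_i\in\mathbb{R}\setminus\{0\}$. Assume $$\sqrt{\frac{a_i}{a_1}}=\frac{b_i}{b_1}>0\quad\text{for all }1\le i\le N,\qquad\text{and}\qquad \sum_{i=1}^Lb_i=\sum_{j=L+1}^Nb_j.$$ Then for every $c_1>0$, setting $c_i=\sqrt{a_i/a_1}\,c_1$ for $1\le i\le N$, there exist real constants $\tau_i$ such that the function $u$ given on each edge by $u_i(t,x)=\varphi_i(x-c_it+\tau_i)$, where $$\varphi_i(z)=\frac{6c_i}{b_i}\cdot\frac{1}{1+\cosh\big(z/\sqrt{a_i}\big)},\qquad z\in\mathbb{R},$$ is a strong solution of this system.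
   Context: A strong solution is a function $u$ which is continuous on the star for each $t$, with $u_i\in\mathcal{C}^{1,1}(\mathsf{e}_i\times[0,\infty))$ and $\partial_tu_i\in\mathcal{C}^{2,0}(\mathsf{e}_i\times[0,\infty))$ on each edge, and which satisfies the system pointwise. The profile $\varphi_i$ is the solitary wave $\frac{6(c-d)}{b}\big(1+\cosh(\sqrt{(c-d)/(ac)}\,z)\big)^{-1}$ with $a=a_i$, $b=b_i$, $c=c_i$, $d=0$. No conditions are imposed at infinity and no initial condition is imposed. *)

theory Defs
  imports "HOL-Analysis.Analysis"
begin

text \<open>The central vertex is x = 0.
  A function on the star is a family u i t x (edge index i, time t, position x).\<close>

definition edge :: "nat \<Rightarrow> nat \<Rightarrow> real set" where
  "edge L i = (if i \<le> L then {..0} else {0..})"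

definition strong_solution_BBMG ::
  "nat \<Rightarrow> nat \<Rightarrow> (nat \<Rightarrow> real) \<Rightarrow> (nat \<Rightarrow> real) \<Rightarrow> (nat \<Rightarrow> real \<Rightarrow> real \<Rightarrow> real) \<Rightarrow> bool" where
  "strong_solution_BBMG N L a b u \<longleftrightarrow>
    (\<exists>ut ux utx utxx :: nat \<Rightarrow> real \<Rightarrow> real \<Rightarrow> real.
      (\<forall>i\<in>{1..N}.
         (\<forall>t\<ge>0. \<forall>x\<in>edge L i.
            ((\<lambda>s. u i s x) has_real_derivative ut i t x) (at t within {0..}) \<and>
            ((\<lambda>y. u i t y) has_real_derivative ux i t x) (at x within edge L i) \<and>
            ((\<lambda>y. ut i t y) has_real_derivative utx i t x) (at x within edge L i) \<and>
            ((\<lambda>y. utx i t y) has_real_derivative utxx i t x) (at x within edge L i)) \<and>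
         continuous_on ({0..} \<times> edge L i) (\<lambda>(t,x). u i t x) \<and>
         continuous_on ({0..} \<times> edge L i) (\<lambda>(t,x). ut i t x) \<and>
         continuous_on ({0..} \<times> edge L i) (\<lambda>(t,x). ux i t x) \<and>
         continuous_on ({0..} \<times> edge L i) (\<lambda>(t,x). utx i t x) \<and>
         continuous_on ({0..} \<times> edge L i) (\<lambda>(t,x). utxx i t x) \<and>
         (\<forall>t>0. \<forall>x\<in>edge L i.
            ut i t x - a i * utxx i t x + b i * u i t x * ux i t x = 0)) \<and>
      (\<forall>t\<ge>0. \<forall>j\<in>{1..N}. \<forall>k\<in>{1..N}. u j t 0 = u k t 0) \<and>
      (\<forall>t\<ge>0. (\<Sum>i=1..L. a i * ux i t 0) - (\<Sum>i=L+1..N. a i * ux i t 0) = 0))"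

definition phi :: "real \<Rightarrow> real \<Rightarrow> real \<Rightarrow> real \<Rightarrow> real" where
  "phi a b c z = (6 * c / b) * (1 / (1 + cosh (z / sqrt a)))"

end

theory Submission
  imports Defs
begin
lemma onepc: "1 + cosh (x::real) \<noteq> 0" using cosh_real_ge_1[of x] by linarith
lemma onepc': "1 + cosh (x::real) > 0" using cosh_real_ge_1[of x] by linarith

definition f0 :: "real \<Rightarrow> real" where "f0 y = 1 / (1 + cosh y)"
definition f1 :: "real \<Rightarrow> real" where "f1 y = - sinh y / (1 + cosh y)^2"
definition f2 :: "real \<Rightarrow> real" where "f2 y = (cosh y - 2) / (1 + cosh y)^2"
definition f3 :: "real \<Rightarrow> real" where "f3 y = sinh y * (5 - cosh y) / (1 + cosh y)^3"

lemma f0_deriv: "(f0 has_real_derivative f1 y) (at y)"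
  unfolding f0_def f1_def
  apply (rule derivative_eq_intros refl)+
  using onepc[of y] apply simp_all
  apply (simp add: field_simps power2_eq_square)
  done

lemma f1_deriv: "(f1 has_real_derivative f2 y) (at y)"
  unfolding f1_def f2_def
  apply (rule derivative_eq_intros refl)+
  using onepc[of y] apply simp_all
  apply (simp add: divide_simps onepc)
  using sinh_square_eq[of y] by algebra

lemma f2_deriv: "(f2 has_real_derivative f3 y) (at y)"
  unfolding f2_def f3_def
  apply (rule derivative_eq_intros refl)+
  using onepc[of y] apply simp_all
  apply (simp add: divide_simps onepc)
  by (simp add: algebra_simps eval_nat_numeral)

lemma f_PDE: "- f1 y + f3 y + 6 * f0 y * f1 y = 0"
  unfolding f0_def f1_def f3_def
  apply (simp add: divide_simps onepc)
  by (simp add: algebra_simps eval_nat_numeral)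
lemma dx:
  fixes g g' :: "real \<Rightarrow> real"
  assumes g: "\<And>y. (g has_real_derivative g' y) (at y)" and "q \<noteq> 0"
    and "D = K * g' ((x - c*t)/q) / q"
  shows "((\<lambda>y. K * g ((y - c*t)/q)) has_real_derivative D) (at x within S)"
proof -
  have l: "((\<lambda>y. (y - c*t)/q) has_real_derivative 1/q) (at x)"
    using assms(2) by (auto intro!: derivative_eq_intros)
  have "((\<lambda>y. g ((y - c*t)/q)) has_real_derivative g' ((x - c*t)/q) * (1/q)) (at x)"
    by (rule DERIV_chain2[OF g l])
  then have "((\<lambda>y. K * g ((y - c*t)/q)) has_real_derivative K * (g' ((x - c*t)/q) * (1/q))) (at x)"
    by (rule DERIV_cmult)
  note h = this
  have "((\<lambda>y. K * g ((y - c*t)/q)) has_real_derivative D) (at x)"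
    by (rule DERIV_cong[OF h]) (simp add: assms(3))
  then show ?thesis by (rule has_field_derivative_at_within)
qed

lemma dt:
  fixes g g' :: "real \<Rightarrow> real"
  assumes g: "\<And>y. (g has_real_derivative g' y) (at y)" and "q \<noteq> 0"
    and "D = K * g' ((x - c*t)/q) * (- c / q)"
  shows "((\<lambda>r. K * g ((x - c*r)/q)) has_real_derivative D) (at t within S)"
proof -
  have l: "((\<lambda>r. (x - c*r)/q) has_real_derivative - c/q) (at t)"
    using assms(2) by (auto intro!: derivative_eq_intros)
  have "((\<lambda>r. g ((x - c*r)/q)) has_real_derivative g' ((x - c*t)/q) * (- c/q)) (at t)"
    by (rule DERIV_chain2[OF g l])
  then have "((\<lambda>r. K * g ((x - c*r)/q)) has_real_derivative K * (g' ((x - c*t)/q) * (- c/q))) (at t)"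
    by (rule DERIV_cmult)
  note h = this
  have "((\<lambda>r. K * g ((x - c*r)/q)) has_real_derivative D) (at t)"
    by (rule DERIV_cong[OF h]) (simp add: assms(3))
  then show ?thesis by (rule has_field_derivative_at_within)
qed

lemma contw:
  fixes h :: "real \<Rightarrow> real"
  assumes "\<And>y. isCont h y" "q \<noteq> 0"
  shows "continuous_on S (\<lambda>(t,x). K * h ((x - c*t)/q))"
proof -
  have "continuous_on S (\<lambda>p. K * h ((snd p - c * fst p)/q))"
  proof (rule continuous_on_mult[OF continuous_on_const])
    show "continuous_on S (\<lambda>p. h ((snd p - c * fst p)/q))"
      apply (rule continuous_on_compose2[of UNIV h])
        apply (rule continuous_at_imp_continuous_on) using assms apply blast
       apply (intro continuous_intros)
      using assms(2) apply auto
      done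
  qed
  then show ?thesis by (simp add: case_prod_unfold)
qed

lemma f0_cont: "isCont f0 y" using f0_deriv by (rule DERIV_isCont)
lemma f1_cont: "isCont f1 y" using f1_deriv by (rule DERIV_isCont)
lemma f2_cont: "isCont f2 y" using f2_deriv by (rule DERIV_isCont)
lemma f3_cont: "isCont f3 y" unfolding f3_def using onepc[of y] by (intro continuous_intros) auto

lemma phi_eq: "phi a b c z = (6 * c / b) * f0 (z / sqrt a)"
  by (simp add: phi_def f0_def)
lemma pde_alg:
  fixes Q b a K C F0 F1 :: real
  assumes "Q \<noteq> 0" "b \<noteq> 0" "a = Q*Q" "K = 6*C/b"
  shows "K*(-C/Q)*F1 - a*(K*(-C/Q)/Q/Q*(F1 - 6*F0*F1)) + b*(K*F0)*(K/Q*F1) = 0"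
  using assms by (simp add: field_simps)

theorem theorem5p1:
  fixes N L :: nat and a b :: "nat \<Rightarrow> real" and c1 :: real
  assumes "2 \<le> N" and "1 \<le> L" and "L < N"
    and "\<forall>i\<in>{1..N}. a i > 0"
    and "\<forall>i\<in>{1..N}. b i \<noteq> 0"
    and "\<forall>i\<in>{1..N}. sqrt (a i / a 1) = b i / b 1 \<and> b i / b 1 > 0"
    and "(\<Sum>i=1..L. b i) = (\<Sum>j=L+1..N. b j)"
    and "c1 > 0"
  shows "\<exists>\<tau> :: nat \<Rightarrow> real. strong_solution_BBMG N L a b
           (\<lambda>i t x. phi (a i) (b i) (sqrt (a i / a 1) * c1)
                       (x - sqrt (a i / a 1) * c1 * t + \<tau> i))"
proof -
  have one: "1 \<in> {1..N}" using assms(1) by simp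
  have a1: "a 1 > 0" "b 1 \<noteq> 0" using one assms(4,5) by auto
  define Q where "Q i = sqrt (a i)" for i
  define C where "C i = sqrt (a i / a 1) * c1" for i
  define K where "K i = 6 * C i / b i" for i
  have Q1: "Q 1 > 0" using a1 by (simp add: Q_def)
  have key: "a i > 0 \<and> b i \<noteq> 0 \<and> Q i \<noteq> 0 \<and> K i = 6*c1/b 1 \<and> C i / Q i = c1 / Q 1
       \<and> Q i = Q 1 * b i / b 1 \<and> Q i * Q i = a i" if i: "i \<in> {1..N}" for i
  proof -
    have ai: "a i > 0" and bi: "b i \<noteq> 0" and r: "sqrt (a i / a 1) = b i / b 1"
      using i assms(4,5,6) by auto
    have Qi: "Q i > 0" using ai by (simp add: Q_def)
    have rq: "sqrt (a i / a 1) = Q i / Q 1" by (simp add: Q_def real_sqrt_divide)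
    have e1: "Q i = Q 1 * b i / b 1" using r rq Q1 a1 by (simp add: field_simps)
    have e2: "K i = 6*c1/b 1" unfolding K_def C_def r using bi a1 by (simp add: field_simps)
    have e3: "C i / Q i = c1 / Q 1" unfolding C_def rq using Qi Q1 by (simp add: field_simps)
    have e4: "Q i * Q i = a i" using ai by (simp add: Q_def)
    show ?thesis using ai bi Qi e1 e2 e3 e4 by (intro conjI) auto
  qed
  have arg: "(0 - C i * t) / Q i = - (c1 / Q 1) * t" if "i \<in> {1..N}" for i t
  proof -
    have h: "C i / Q i = c1 / Q 1" using key[OF that] by blast
    have "(0 - C i * t) / Q i = - (C i / Q i) * t" by simp
    then show ?thesis unfolding h .
  qed
  have f3eq: "f3 y = f1 y - 6 * f0 y * f1 y" for y using f_PDE[of y] by linarith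
  have main: "strong_solution_BBMG N L a b (\<lambda>i t x. K i * f0 ((x - C i * t) / Q i))"
    unfolding strong_solution_BBMG_def
    apply (rule exI[of _ "\<lambda>i t x. (K i * (- C i / Q i)) * f1 ((x - C i * t)/Q i)"])
    apply (rule exI[of _ "\<lambda>i t x. (K i / Q i) * f1 ((x - C i * t)/Q i)"])
    apply (rule exI[of _ "\<lambda>i t x. (K i * (- C i / Q i) / Q i) * f2 ((x - C i * t)/Q i)"])
    apply (rule exI[of _ "\<lambda>i t x. (K i * (- C i / Q i) / Q i / Q i) * f3 ((x - C i * t)/Q i)"])
  proof (intro conjI ballI allI impI)
    fix i assume i: "i \<in> {1..N}"
    note k = key[OF i]
    have Qn: "Q i \<noteq> 0" using k by blast
    {
      fix t x :: real
      show "((\<lambda>s. K i * f0 ((x - C i * s) / Q i)) has_real_derivative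
              K i * (- C i / Q i) * f1 ((x - C i * t) / Q i)) (at t within {0..})"
        by (rule dt[OF f0_deriv Qn]) simp
      show "((\<lambda>y. K i * f0 ((y - C i * t) / Q i)) has_real_derivative
              K i / Q i * f1 ((x - C i * t) / Q i)) (at x within edge L i)"
        by (rule dx[OF f0_deriv Qn]) simp
      show "((\<lambda>y. K i * (- C i / Q i) * f1 ((y - C i * t) / Q i)) has_real_derivative
              K i * (- C i / Q i) / Q i * f2 ((x - C i * t) / Q i)) (at x within edge L i)"
        by (rule dx[OF f1_deriv Qn]) simp
      show "((\<lambda>y. K i * (- C i / Q i) / Q i * f2 ((y - C i * t) / Q i)) has_real_derivative
              K i * (- C i / Q i) / Q i / Q i * f3 ((x - C i * t) / Q i)) (at x within edge L i)"
        by (rule dx[OF f2_deriv Qn]) simp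
      show "K i * (- C i / Q i) * f1 ((x - C i * t) / Q i) -
            a i * (K i * (- C i / Q i) / Q i / Q i * f3 ((x - C i * t) / Q i)) +
            b i * (K i * f0 ((x - C i * t) / Q i)) * (K i / Q i * f1 ((x - C i * t) / Q i)) = 0"
        unfolding f3eq by (rule pde_alg) (use k in \<open>auto simp: K_def\<close>)
    }
    show "continuous_on ({0..} \<times> edge L i) (\<lambda>(t, x). K i * f0 ((x - C i * t) / Q i))"
      by (rule contw[OF f0_cont Qn])
    show "continuous_on ({0..} \<times> edge L i) (\<lambda>(t, x). K i * (- C i / Q i) * f1 ((x - C i * t) / Q i))"
      by (rule contw[OF f1_cont Qn])
    show "continuous_on ({0..} \<times> edge L i) (\<lambda>(t, x). K i / Q i * f1 ((x - C i * t) / Q i))"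
      by (rule contw[OF f1_cont Qn])
    show "continuous_on ({0..} \<times> edge L i) (\<lambda>(t, x). K i * (- C i / Q i) / Q i * f2 ((x - C i * t) / Q i))"
      by (rule contw[OF f2_cont Qn])
    show "continuous_on ({0..} \<times> edge L i) (\<lambda>(t, x). K i * (- C i / Q i) / Q i / Q i * f3 ((x - C i * t) / Q i))"
      by (rule contw[OF f3_cont Qn])
  next
    fix t :: real and j k assume j: "j \<in> {1..N}" and kk: "k \<in> {1..N}"
    show "K j * f0 ((0 - C j * t) / Q j) = K k * f0 ((0 - C k * t) / Q k)"
      using arg[OF j] arg[OF kk] key[OF j] key[OF kk] by simp
  next
    fix t :: real
    define M where "M = Q 1 / b 1 * (6 * c1 / b 1) * f1 (- (c1 / Q 1) * t)"
    have e: "a i * (K i / Q i * f1 ((0 - C i * t) / Q i)) = b i * M" if "i \<in> {1..N}" for i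
    proof -
      note k = key[OF that]
      have qn: "Q i \<noteq> 0" and aq: "Q i * Q i = a i" and kq: "K i = 6*c1/b 1"
        and qq: "Q i = Q 1 * b i / b 1" using k by blast+
      have "a i * (K i / Q i * f1 ((0 - C i * t) / Q i)) = Q i * K i * f1 (- (c1 / Q 1) * t)"
        unfolding arg[OF that] aq[symmetric] using qn by (simp add: field_simps)
      also have "\<dots> = b i * M" unfolding M_def kq qq using a1 Q1 by (simp add: field_simps)
      finally show ?thesis .
    qed
    have s1: "(\<Sum>i=1..L. a i * (K i / Q i * f1 ((0 - C i * t) / Q i))) = (\<Sum>i=1..L. b i) * M"
      unfolding sum_distrib_right using assms(3) by (intro sum.cong refl e) auto
    have s2: "(\<Sum>i=L+1..N. a i * (K i / Q i * f1 ((0 - C i * t) / Q i))) = (\<Sum>i=L+1..N. b i) * M"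
      unfolding sum_distrib_right using assms(2) by (intro sum.cong refl e) auto
    show "(\<Sum>i=1..L. a i * (K i / Q i * f1 ((0 - C i * t) / Q i))) -
          (\<Sum>i=L+1..N. a i * (K i / Q i * f1 ((0 - C i * t) / Q i))) = 0"
      unfolding s1 s2 assms(7) by simp
  qed
  have ueq: "(\<lambda>i t x. phi (a i) (b i) (sqrt (a i / a 1) * c1) (x - sqrt (a i / a 1) * c1 * t + 0))
       = (\<lambda>i t x. K i * f0 ((x - C i * t) / Q i))"
    by (simp add: fun_eq_iff phi_eq K_def C_def Q_def)
  show ?thesis
    apply (rule exI[of _ "\<lambda>_. 0"])
    using main by (simp only: ueq)
qed

end
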